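(* Let $M$ be a Kähler QCH-manifold of real dimension $2n$ with curvature $\bar R=a\pi+b\Phi+c\Psi$, and let $N$ be a Lagrangian submanifold of $M$ of real dimension $n\geq 3$. Then for every $p\in N$ and every unit vector $X\in T_pN$, $$\mathrm{Ric}(X)\geq -\frac{(n-2)(n-1)(n+1)}{8}a-\frac{n-2}{8}\{n-[\eta(X)^2+\tilde\eta(X)^2]\}b-\{(n-1)[\|\eta^\top\|^2\|\tilde\eta^\top\|^2-g(\eta^\top,\tilde\eta^\top)^2]-\|\eta(X)\tilde\eta^\top-\tilde\eta(X)\eta^\top\|^2\}c+(n-1)\tau-\frac{(3n-1)(n-2)n^2}{2(3n+5)}\|H\|^2,$$ where $a,b,c$ are evaluated at $p$ and $\tau$ is the scalar curvature of $N$ at $p$. Equality holds for every unit vector $X\in T_pN$ if and only if $p$ is a totally geodesic point of $N$.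
   Context: A Kähler QCH-manifold (Kähler manifold of quasi-constant holomorphic sectional curvatures) is a Kähler manifold $(M,g,J,D)$ of real dimension $2n\geq 4$ with a $J$-invariant distribution $D$ of codimension 2, together with a local unit vector field $\xi$ such that $D^\perp=\mathrm{span}\{\xi,J\xi\}$, whose curvature tensor satisfies $\bar R=a\pi+b\Phi+c\Psi$ for functions $a,b,c$ on $M$. Here $\bar R(X,Y,Z,U)=g(\bar R(X,Y)Z,U)$ with $\bar R(X,Y)Z=\bar\nabla_X\bar\nabla_YZ-\bar\nabla_Y\bar\nabla_XZ-\bar\nabla_{[X,Y]}Z$; $\eta(X)=g(\xi,X)$, $\tilde\eta(X)=g(J\xi,X)$; and $4\pi(X,Y,Z,U)=g(Y,Z)g(X,U)-g(X,Z)g(Y,U)+g(JY,Z)g(JX,U)-g(JX,Z)g(JY,U)-2g(JX,Y)g(JZ,U)$; $8\Phi(X,Y,Z,U)=g(Y,Z)\{\eta(X)\eta(U)+\tilde\eta(X)\tilde\eta(U)\}-g(X,Z)\{\eta(Y)\eta(U)+\tilde\eta(Y)\tilde\eta(U)\}+g(X,U)\{\eta(Y)\eta(Z)+\tilde\eta(Y)\tilde\eta(Z)\}-g(Y,U)\{\eta(X)\eta(Z)+\tilde\eta(X)\tilde\eta(Z)\}+g(JY,Z)\{\eta(X)\tilde\eta(U)-\eta(U)\tilde\eta(X)\}-g(JX,Z)\{\eta(Y)\tilde\eta(U)-\eta(U)\tilde\eta(Y)\}+g(JX,U)\{\eta(Y)\tilde\eta(Z)-\eta(Z)\tilde\eta(Y)\}-g(JY,U)\{\eta(X)\tilde\eta(Z)-\eta(Z)\tilde\eta(X)\}-2g(JX,Y)\{\eta(Z)\tilde\eta(U)-\eta(U)\tilde\eta(Z)\}-2g(JZ,U)\{\eta(X)\tilde\eta(Y)-\eta(Y)\tilde\eta(X)\}$;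 $\Psi(X,Y,Z,U)=\eta(Y)\eta(Z)\tilde\eta(X)\tilde\eta(U)-\eta(X)\eta(Z)\tilde\eta(Y)\tilde\eta(U)+\eta(X)\eta(U)\tilde\eta(Y)\tilde\eta(Z)-\eta(Y)\eta(U)\tilde\eta(X)\tilde\eta(Z)$. A submanifold $N$ of real dimension $n$ is Lagrangian if $J$ maps each $T_pN$ onto the normal space $T_pN^\perp$. $h$ is the second fundamental form, $H=\frac1n\sum_{i=1}^n h(e_i,e_i)$ the mean curvature vector ($\{e_i\}$ an orthonormal basis of $T_pN$); $p$ is totally geodesic if $h=0$ at $p$. The curvature $R$ of $N$ uses the same sign convention; the sectional curvature is $K(e_i\wedge e_j)=R(e_i,e_j,e_j,e_i)$, the scalar curvature is $\tau(p)=\sum_{1\leq i<j\leq n}K(e_i\wedge e_j)$, and for a unit $X=e_1\in T_pN$, $\mathrm{Ric}(X)=\sum_{i=2}^n K(e_1\wedge e_i)$. $\eta^\top,\tilde\eta^\top$ denote the orthogonal projections onto $T_pN$ of the vectors $\xi$, $J\xi$ (the metric duals of $\eta,\tilde\eta$), and $\|\cdot\|$ is the norm induced by $g$. *)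

theory Defs
  imports "HOL-Analysis.Analysis"
begin

text \<open>The tangent space of M at p is a real
inner product space V of dimension 2n with complex structure J; xi is the
value at p of the unit vector field spanning D-perp together with J xi.\<close>

definition piT :: "('a::real_inner \<Rightarrow> 'a) \<Rightarrow> 'a \<Rightarrow> 'a \<Rightarrow> 'a \<Rightarrow> 'a \<Rightarrow> real" where
  "piT J X Y Z U = (1/4) *
     (inner Y Z * inner X U - inner X Z * inner Y U
      + inner (J Y) Z * inner (J X) U - inner (J X) Z * inner (J Y) U
      - 2 * inner (J X) Y * inner (J Z) U)"

definition PhiT :: "('a::real_inner \<Rightarrow> 'a) \<Rightarrow> 'a \<Rightarrow> 'a \<Rightarrow> 'a \<Rightarrow> 'a \<Rightarrow> 'a \<Rightarrow> real" where
  "PhiT J xi X Y Z U = (let eta = (\<lambda>v. inner xi v); et = (\<lambda>v. inner (J xi) v) in (1/8) *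
     (inner Y Z * (eta X * eta U + et X * et U)
      - inner X Z * (eta Y * eta U + et Y * et U)
      + inner X U * (eta Y * eta Z + et Y * et Z)
      - inner Y U * (eta X * eta Z + et X * et Z)
      + inner (J Y) Z * (eta X * et U - eta U * et X)
      - inner (J X) Z * (eta Y * et U - eta U * et Y)
      + inner (J X) U * (eta Y * et Z - eta Z * et Y)
      - inner (J Y) U * (eta X * et Z - eta Z * et X)
      - 2 * inner (J X) Y * (eta Z * et U - eta U * et Z)
      - 2 * inner (J Z) U * (eta X * et Y - eta Y * et X)))"

definition PsiT :: "('a::real_inner \<Rightarrow> 'a) \<Rightarrow> 'a \<Rightarrow> 'a \<Rightarrow> 'a \<Rightarrow> 'a \<Rightarrow> 'a \<Rightarrow> real" where
  "PsiT J xi X Y Z U = (let eta = (\<lambda>v. inner xi v); et = (\<lambda>v. inner (J xi) v) in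
      eta Y * eta Z * et X * et U - eta X * eta Z * et Y * et U
    + eta X * eta U * et Y * et Z - eta Y * eta U * et X * et Z)"

definition onb :: "'a::real_inner set \<Rightarrow> nat \<Rightarrow> (nat \<Rightarrow> 'a) \<Rightarrow> bool" where
  "onb T n e \<longleftrightarrow> (\<forall>i\<in>{1..n}. \<forall>j\<in>{1..n}. inner (e i) (e j) = (if i = j then 1 else 0))
                 \<and> span (e ` {1..n}) = T"

definition RicB :: "('a \<Rightarrow> 'a \<Rightarrow> 'a \<Rightarrow> 'a \<Rightarrow> real) \<Rightarrow> nat \<Rightarrow> (nat \<Rightarrow> 'a) \<Rightarrow> real" where
  "RicB R n e = (\<Sum>i\<in>{2..n}. R (e 1) (e i) (e i) (e 1))"

definition tauB :: "('a \<Rightarrow> 'a \<Rightarrow> 'a \<Rightarrow> 'a \<Rightarrow> real) \<Rightarrow> nat \<Rightarrow> (nat \<Rightarrow> 'a) \<Rightarrow> real" where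
  "tauB R n e = (\<Sum>j\<in>{1..n}. \<Sum>i\<in>{1..<j}. R (e i) (e j) (e j) (e i))"

definition meanH :: "('a::real_vector \<Rightarrow> 'a \<Rightarrow> 'a) \<Rightarrow> nat \<Rightarrow> (nat \<Rightarrow> 'a) \<Rightarrow> 'a" where
  "meanH h n e = (1 / real n) *\<^sub>R (\<Sum>i\<in>{1..n}. h (e i) (e i))"

definition tproj :: "nat \<Rightarrow> (nat \<Rightarrow> 'a::real_inner) \<Rightarrow> 'a \<Rightarrow> 'a" where
  "tproj n e v = (\<Sum>i\<in>{1..n}. inner v (e i) *\<^sub>R e i)"

end

theory Submission
  imports Defs
begin


lemma sum_if_const: "(\<Sum>c\<in>A. if P then f c else (0::real)) = (if P then sum f A else 0)"
  by auto

lemma qsum: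
  fixes X :: "nat \<Rightarrow> nat \<Rightarrow> nat \<Rightarrow> real" and A :: "nat set" and \<nu> :: "nat \<Rightarrow> real"
  assumes fin: "finite A"
    and s1: "\<And>a b c. X a b c = X b a c" and s2: "\<And>a b c. X a b c = X a c b"
  shows "(\<Sum>a\<in>A. \<Sum>b\<in>A. \<Sum>c\<in>A. X a b c * (\<nu> a * (if b = c then 1 else 0) + \<nu> b * (if a = c then 1 else 0) + \<nu> c * (if a = b then 1 else 0)))
     = 3 * (\<Sum>a\<in>A. \<nu> a * (\<Sum>b\<in>A. X a b b))"
proof -
  have 1: "(\<Sum>a\<in>A. \<Sum>b\<in>A. \<Sum>c\<in>A. X a b c * (\<nu> a * (if b = c then 1 else 0))) = (\<Sum>a\<in>A. \<nu> a * (\<Sum>b\<in>A. X a b b))"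
    using fin by (simp add: if_distrib sum_distrib_left ac_simps cong: if_cong)
  have 2: "(\<Sum>a\<in>A. \<Sum>b\<in>A. \<Sum>c\<in>A. X a b c * (\<nu> b * (if a = c then 1 else 0))) = (\<Sum>a\<in>A. \<nu> a * (\<Sum>b\<in>A. X a b b))"
  proof -
    have "(\<Sum>a\<in>A. \<Sum>b\<in>A. \<Sum>c\<in>A. X a b c * (\<nu> b * (if a = c then 1 else 0))) = (\<Sum>a\<in>A. \<Sum>b\<in>A. X a b a * \<nu> b)"
      using fin by (simp add: if_distrib cong: if_cong)
    also have "\<dots> = (\<Sum>b\<in>A. \<Sum>a\<in>A. X b a a * \<nu> b)" by (subst sum.swap) (intro sum.cong refl, metis s1 s2)
    finally show ?thesis by (simp add: sum_distrib_left ac_simps)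
  qed
  have 3: "(\<Sum>a\<in>A. \<Sum>b\<in>A. \<Sum>c\<in>A. X a b c * (\<nu> c * (if a = b then 1 else 0))) = (\<Sum>a\<in>A. \<nu> a * (\<Sum>b\<in>A. X a b b))"
  proof -
    have "(\<Sum>a\<in>A. \<Sum>b\<in>A. \<Sum>c\<in>A. X a b c * (\<nu> c * (if a = b then 1 else 0))) = (\<Sum>a\<in>A. \<Sum>c\<in>A. X a a c * \<nu> c)"
      using fin by (simp add: if_distrib sum_if_const cong: if_cong)
    also have "\<dots> = (\<Sum>c\<in>A. \<Sum>a\<in>A. X c a a * \<nu> c)" by (subst sum.swap) (intro sum.cong refl, metis s1 s2)
    finally show ?thesis by (simp add: sum_distrib_left ac_simps)
  qed
  show ?thesis using 1 2 3 by (simp add: distrib_left sum.distrib)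
qed

lemma trace_ineq:
  fixes T :: "nat \<Rightarrow> nat \<Rightarrow> nat \<Rightarrow> real" and A :: "nat set"
  assumes fin: "finite A"
    and s1: "\<And>a b c. T a b c = T b a c" and s2: "\<And>a b c. T a b c = T a c b"
  shows "3 * (\<Sum>a\<in>A. (\<Sum>b\<in>A. T b b a)\<^sup>2) \<le> (real (card A) + 2) * (\<Sum>a\<in>A. \<Sum>b\<in>A. \<Sum>c\<in>A. (T a b c)\<^sup>2)"
proof -
  define \<nu> where "\<nu> = (\<lambda>a. \<Sum>b\<in>A. T b b a)"
  define m where "m = real (card A)"
  define q where "q = (\<lambda>a b c. \<nu> a * (if b = c then 1 else 0) + \<nu> b * (if a = c then 1 else 0) + \<nu> c * (if a = b then 1 else (0::real)))"
  have nu2: "(\<Sum>b\<in>A. T a b b) = \<nu> a" for a unfolding \<nu>_def by (metis s1 s2)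
  have q1: "q a b c = q b a c" for a b c unfolding q_def by auto
  have q2: "q a b c = q a c b" for a b c unfolding q_def by auto
  have TQ: "(\<Sum>a\<in>A. \<Sum>b\<in>A. \<Sum>c\<in>A. T a b c * q a b c) = 3 * (\<Sum>a\<in>A. \<nu> a * \<nu> a)"
    unfolding q_def using qsum[OF fin s1 s2, where \<nu>=\<nu>] nu2 by simp
  have qbb: "(\<Sum>b\<in>A. q a b b) = (m + 2) * \<nu> a" if "a \<in> A" for a
  proof -
    have "q a b b = \<nu> a + (if a = b then 2 * \<nu> a else 0)" for b by (auto simp: q_def)
    hence "(\<Sum>b\<in>A. q a b b) = (\<Sum>b\<in>A. \<nu> a + (if a = b then 2 * \<nu> a else 0))" by simp
    also have "\<dots> = m * \<nu> a + 2 * \<nu> a" using fin that by (simp add: sum.distrib m_def)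
    finally show ?thesis by (simp add: algebra_simps)
  qed
  have QQ: "(\<Sum>a\<in>A. \<Sum>b\<in>A. \<Sum>c\<in>A. q a b c * q a b c) = 3 * (m + 2) * (\<Sum>a\<in>A. \<nu> a * \<nu> a)"
  proof -
    have "(\<Sum>a\<in>A. \<Sum>b\<in>A. \<Sum>c\<in>A. q a b c * q a b c) = 3 * (\<Sum>a\<in>A. \<nu> a * (\<Sum>b\<in>A. q a b b))"
      using qsum[OF fin q1 q2, where \<nu>=\<nu>] unfolding q_def[symmetric] by (simp add: q_def)
    also have "\<dots> = 3 * (\<Sum>a\<in>A. (m + 2) * (\<nu> a * \<nu> a))"
      by (simp add: qbb ac_simps cong: sum.cong)
    finally show ?thesis by (simp add: sum_distrib_left[symmetric] mult.assoc)
  qed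
  have "0 \<le> (\<Sum>a\<in>A. \<Sum>b\<in>A. \<Sum>c\<in>A. ((m + 2) * T a b c - q a b c)\<^sup>2)"
    by (intro sum_nonneg) simp
  also have "\<dots> = (m+2)^2 * (\<Sum>a\<in>A. \<Sum>b\<in>A. \<Sum>c\<in>A. (T a b c)\<^sup>2)
      - 2 * (m + 2) * (\<Sum>a\<in>A. \<Sum>b\<in>A. \<Sum>c\<in>A. T a b c * q a b c)
      + (\<Sum>a\<in>A. \<Sum>b\<in>A. \<Sum>c\<in>A. q a b c * q a b c)"
    by (simp add: power2_eq_square algebra_simps sum.distrib sum_subtractf sum_distrib_left)
  finally have "0 \<le> (m+2)^2 * (\<Sum>a\<in>A. \<Sum>b\<in>A. \<Sum>c\<in>A. (T a b c)\<^sup>2) - 3 * (m + 2) * (\<Sum>a\<in>A. \<nu> a * \<nu> a)"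
    unfolding TQ QQ by (simp add: algebra_simps)
  moreover have "m + 2 > 0" unfolding m_def by simp
  ultimately have "0 \<le> (m+2) * ((m+2) * (\<Sum>a\<in>A. \<Sum>b\<in>A. \<Sum>c\<in>A. (T a b c)\<^sup>2) - 3 * (\<Sum>a\<in>A. \<nu> a * \<nu> a))"
    by (simp add: power2_eq_square algebra_simps)
  hence "0 \<le> (m+2) * (\<Sum>a\<in>A. \<Sum>b\<in>A. \<Sum>c\<in>A. (T a b c)\<^sup>2) - 3 * (\<Sum>a\<in>A. \<nu> a * \<nu> a)"
    using \<open>m + 2 > 0\<close> by (simp add: zero_le_mult_iff)
  thus ?thesis unfolding m_def \<nu>_def by (simp add: power2_eq_square)
qed

lemma cs_sum:
  fixes f :: "nat \<Rightarrow> real"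
  assumes "finite A"
  shows "(\<Sum>i\<in>A. f i)\<^sup>2 \<le> real (card A) * (\<Sum>i\<in>A. (f i)\<^sup>2)"
proof -
  have "0 \<le> (\<Sum>i\<in>A. \<Sum>j\<in>A. (f i - f j)\<^sup>2)" by (intro sum_nonneg) simp
  also have "\<dots> = 2 * real (card A) * (\<Sum>i\<in>A. (f i)\<^sup>2) - 2 * (\<Sum>i\<in>A. f i)\<^sup>2"
    by (simp add: power2_eq_square algebra_simps sum.distrib sum_subtractf sum_distrib_left sum_distrib_right)
  finally show ?thesis by simp
qed

lemma pairs_sum:
  fixes f :: "nat \<Rightarrow> nat \<Rightarrow> real"
  assumes sym: "\<And>i j. f i j = f j i"
  shows "(\<Sum>j\<in>{1..n}. \<Sum>i\<in>{1..<j}. f i j) = ((\<Sum>i\<in>{1..n}. \<Sum>j\<in>{1..n}. f i j) - (\<Sum>i\<in>{1..n}. f i i)) / 2"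
proof (induction n)
  case 0
  then show ?case by simp
next
  case (Suc n)
  have e1: "(\<Sum>i\<in>{1..Suc n}. g i) = (\<Sum>i\<in>{1..n}. g i) + g (Suc n)" for g :: "nat \<Rightarrow> real"
    by simp
  have e2: "(\<Sum>i\<in>{1..<Suc n}. g i) = (\<Sum>i\<in>{1..n}. g i)" for g :: "nat \<Rightarrow> real"
    by (simp add: atLeastLessThanSuc_atLeastAtMost)
  have "(\<Sum>i\<in>{1..Suc n}. \<Sum>j\<in>{1..Suc n}. f i j) = (\<Sum>i\<in>{1..n}. \<Sum>j\<in>{1..n}. f i j)
      + 2 * (\<Sum>i\<in>{1..n}. f i (Suc n)) + f (Suc n) (Suc n)"
  proof -
    have "(\<Sum>j\<in>{1..n}. f (Suc n) j) = (\<Sum>i\<in>{1..n}. f i (Suc n))" using sym by simp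
    thus ?thesis by (simp add: e1 sum.distrib)
  qed
  moreover have "(\<Sum>j\<in>{1..Suc n}. \<Sum>i\<in>{1..<j}. f i j) = (\<Sum>j\<in>{1..n}. \<Sum>i\<in>{1..<j}. f i j) + (\<Sum>i\<in>{1..n}. f i (Suc n))"
    by (simp only: e1 e2)
  moreover have "(\<Sum>i\<in>{1..Suc n}. f i i) = (\<Sum>i\<in>{1..n}. f i i) + f (Suc n) (Suc n)" by (simp only: e1)
  ultimately show ?case using Suc by (simp add: field_simps)
qed

lemma even_id:
  fixes N y w :: real
  assumes "N \<ge> 3"
  shows "y * w - y\<^sup>2 - (N - 1) / 2 * ((y + w)\<^sup>2 - 3 * y\<^sup>2) + (3*N-1)*(N-2)/(2*(3*N+5)) * (y + w)\<^sup>2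
     = (N-2)/(2*(3*N+5)*(N+1)) * (3*(N+1)*y - 2*w)\<^sup>2 - (N - 1) / 2 * (3 * w\<^sup>2 / (N+1))"
proof -
  have h: "3*N+5 \<noteq> 0" "N + 1 \<noteq> 0" using assms by auto
  define u where "u = 1/(3*N+5)"
  define z where "z = 1/(N+1)"
  have hu: "u * (3*N+5) = 1" "z * (N+1) = 1" using h by (auto simp: u_def z_def)
  have e: "(3*N-1)*(N-2)/(2*(3*N+5)) = (3*N-1)*(N-2)*u/2" "(N-2)/(2*(3*N+5)*(N+1)) = (N-2)*u*z/2"
     "3 * w\<^sup>2 / (N+1) = 3*w\<^sup>2*z" by (simp_all add: u_def z_def)
  show ?thesis unfolding e using hu by algebra
qed

lemma odd_id:
  fixes N x t P :: real
  assumes "N \<ge> 3"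
  shows "x * t - P - (N - 1) / 2 * ((x + t)\<^sup>2 - x\<^sup>2 - 3 * P) + (3*N-1)*(N-2)/(2*(3*N+5)) * (x + t)\<^sup>2
     = (N-2)/(2*(3*N+5)*(N-1)) * ((4*t - 3*(N-1)*x/2)\<^sup>2 + (N-1)*(3*N+5)*x\<^sup>2/4) + (3*N-5)/2 * (P - t\<^sup>2/(N-1))"
proof -
  have h: "3*N+5 \<noteq> 0" "N - 1 \<noteq> 0" using assms by auto
  define u where "u = 1/(3*N+5)"
  define z where "z = 1/(N-1)"
  have hu: "u * (3*N+5) = 1" "z * (N-1) = 1" using h by (auto simp: u_def z_def)
  have e: "(3*N-1)*(N-2)/(2*(3*N+5)) = (3*N-1)*(N-2)*u/2" "(N-2)/(2*(3*N+5)*(N-1)) = (N-2)*u*z/2"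
     "t\<^sup>2/(N-1) = t\<^sup>2*z" by (simp_all add: u_def z_def)
  show ?thesis unfolding e using hu by algebra
qed

lemma core:
  fixes N x t P S :: real and y w :: "nat \<Rightarrow> real" and A :: "nat set"
  assumes N3: "N \<ge> 3" and tP: "t\<^sup>2 \<le> (N-1)*P" and tr: "3*(\<Sum>a\<in>A. (w a)\<^sup>2) \<le> (N+1)*S"
  defines "Q \<equiv> (x*t + (\<Sum>a\<in>A. y a * w a) - (\<Sum>a\<in>A. (y a)\<^sup>2) - P)
     - (N-1)/2 * (((x+t)\<^sup>2 + (\<Sum>a\<in>A. (y a + w a)\<^sup>2)) - (x\<^sup>2 + 3*(\<Sum>a\<in>A. (y a)\<^sup>2) + 3*P + S))
     + (3*N-1)*(N-2)/(2*(3*N+5)) * ((x+t)\<^sup>2 + (\<Sum>a\<in>A. (y a + w a)\<^sup>2))"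
  shows "Q \<ge> 0" and "Q = 0 \<Longrightarrow> x = 0 \<and> P = 0"
proof -
  define C where "C = (3*N-1)*(N-2)/(2*(3*N+5))"
  define ev where "ev = (\<lambda>a. y a * w a - (y a)\<^sup>2 - (N - 1) / 2 * ((y a + w a)\<^sup>2 - 3 * (y a)\<^sup>2) + C * (y a + w a)\<^sup>2)"
  define od where "od = x * t - P - (N - 1) / 2 * ((x + t)\<^sup>2 - x\<^sup>2 - 3 * P) + C * (x + t)\<^sup>2"
  define F where "F = (N-2)/(2*(3*N+5)*(N-1)) * ((4*t - 3*(N-1)*x/2)\<^sup>2 + (N-1)*(3*N+5)*x\<^sup>2/4)"
  define sq where "sq = (\<lambda>a. (N-2)/(2*(3*N+5)*(N+1)) * (3*(N+1)*y a - 2*w a)\<^sup>2)"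
  have Qs: "Q = od + (\<Sum>a\<in>A. ev a) + (N-1)/2 * S"
    unfolding Q_def od_def ev_def C_def[symmetric]
    by (simp add: sum.distrib sum_subtractf sum_distrib_left algebra_simps)
  have od: "od = F + (3*N-5)/2 * (P - t\<^sup>2/(N-1))"
    unfolding od_def F_def C_def using odd_id[OF N3] by simp
  have ev: "ev a = sq a - (N - 1) / 2 * (3 * (w a)\<^sup>2 / (N+1))" for a
    unfolding ev_def sq_def C_def using even_id[OF N3] by simp
  have evs: "(\<Sum>a\<in>A. ev a) = (\<Sum>a\<in>A. sq a) - (N - 1) / 2 * (3 * (\<Sum>a\<in>A. (w a)\<^sup>2) / (N+1))"
    by (simp add: ev sum_subtractf sum_distrib_left sum_divide_distrib)
  have Q2: "Q = F + (3*N-5)/2 * (P - t\<^sup>2/(N-1)) + (\<Sum>a\<in>A. sq a) + (N-1)/2 * (S - 3 * (\<Sum>a\<in>A. (w a)\<^sup>2) / (N+1))"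
    unfolding Qs od evs by (simp add: algebra_simps)
  have F0: "F \<ge> 0" unfolding F_def using N3 by (intro mult_nonneg_nonneg add_nonneg_nonneg) auto
  have P0: "P - t\<^sup>2/(N-1) \<ge> 0" using tP N3 by (simp add: field_simps)
  have S0: "S - 3 * (\<Sum>a\<in>A. (w a)\<^sup>2) / (N+1) \<ge> 0" using tr N3 by (simp add: field_simps)
  have sq0: "(\<Sum>a\<in>A. sq a) \<ge> 0" unfolding sq_def using N3 by (intro sum_nonneg mult_nonneg_nonneg) auto
  have c1: "(3*N-5)/2 \<ge> 0" "(N-1)/2 \<ge> 0" using N3 by auto
  show "Q \<ge> 0" unfolding Q2 using F0 P0 S0 sq0 c1 by (simp add: add_nonneg_nonneg)
  assume "Q = 0"
  hence "F = 0" and P1: "(3*N-5)/2 * (P - t\<^sup>2/(N-1)) = 0" unfolding Q2 using F0 P0 S0 sq0 c1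
    by (smt (verit) mult_nonneg_nonneg)+
  have pos: "(N-2)/(2*(3*N+5)*(N-1)) > 0" using N3 by (intro divide_pos_pos mult_pos_pos) auto
  have "(4*t - 3*(N-1)*x/2)\<^sup>2 + (N-1)*(3*N+5)*x\<^sup>2/4 = 0" using \<open>F = 0\<close> pos N3 unfolding F_def by simp
  moreover have "(N-1)*(3*N+5)*x\<^sup>2/4 \<ge> 0" using N3 by simp
  ultimately have "(N-1)*(3*N+5)*x\<^sup>2/4 = 0" "(4*t - 3*(N-1)*x/2)\<^sup>2 = 0" by (smt (verit) zero_le_power2)+
  hence x0: "x = 0" and "t = 0" using N3 by auto
  moreover have "P = 0" using P1 \<open>t = 0\<close> N3 by simp
  ultimately show "x = 0 \<and> P = 0" by simp
qed

lemma split1: "1 \<le> (n::nat) \<Longrightarrow> (\<Sum>i\<in>{1..n}. g i) = g 1 + (\<Sum>i\<in>{2..n}. (g i :: real))"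
  by (simp add: sum.atLeast_Suc_atMost numeral_2_eq_2)

lemma s_parts:
  fixes s :: "nat \<Rightarrow> nat \<Rightarrow> nat \<Rightarrow> real"
  assumes n3: "n \<ge> 3" and s1: "\<And>i j k. s i j k = s j i k" and s2: "\<And>i j k. s i j k = s i k j"
  defines "A \<equiv> {2..n}"
  shows "(\<Sum>i\<in>{2..n}. \<Sum>r\<in>{1..n}. s 1 1 r * s i i r - (s 1 i r)\<^sup>2)
     = s 1 1 1 * (\<Sum>a\<in>A. s 1 a a) + (\<Sum>a\<in>A. s 1 1 a * (\<Sum>b\<in>A. s b b a)) - (\<Sum>a\<in>A. (s 1 1 a)\<^sup>2)
       - (\<Sum>a\<in>A. \<Sum>b\<in>A. (s 1 a b)\<^sup>2)"
    and "(\<Sum>r\<in>{1..n}. (\<Sum>i\<in>{1..n}. s i i r)\<^sup>2) = (s 1 1 1 + (\<Sum>a\<in>A. s 1 a a))\<^sup>2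
       + (\<Sum>a\<in>A. (s 1 1 a + (\<Sum>b\<in>A. s b b a))\<^sup>2)"
    and "(\<Sum>i\<in>{1..n}. \<Sum>j\<in>{1..n}. \<Sum>r\<in>{1..n}. (s i j r)\<^sup>2) = (s 1 1 1)\<^sup>2 + 3 * (\<Sum>a\<in>A. (s 1 1 a)\<^sup>2)
       + 3 * (\<Sum>a\<in>A. \<Sum>b\<in>A. (s 1 a b)\<^sup>2) + (\<Sum>a\<in>A. \<Sum>b\<in>A. \<Sum>c\<in>A. (s a b c)\<^sup>2)"
proof -
  have r1: "s a a (Suc 0) = s (Suc 0) a a" "s (Suc 0) a (Suc 0) = s (Suc 0) (Suc 0) a" "s a (Suc 0) (Suc 0) = s (Suc 0) (Suc 0) a"
     "s a (Suc 0) b = s (Suc 0) a b" "s a b (Suc 0) = s (Suc 0) a b"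
    for a b by (metis s1 s2)+
  have n1: "1 \<le> n" using n3 by simp
  have e1: "(\<Sum>x\<in>{2..n}. s (Suc 0) (Suc 0) (Suc 0) * s x x (Suc 0)) = (\<Sum>x\<in>{2..n}. s (Suc 0) (Suc 0) (Suc 0) * s (Suc 0) x x)"
    "(\<Sum>x\<in>{2..n}. (s (Suc 0) x (Suc 0))\<^sup>2) = (\<Sum>x\<in>{2..n}. (s (Suc 0) (Suc 0) x)\<^sup>2)"
    "(\<Sum>x\<in>{2..n}. s x x (Suc 0)) = (\<Sum>x\<in>{2..n}. s (Suc 0) x x)"
    "(\<Sum>j\<in>{2..n}. (s (Suc 0) j (Suc 0))\<^sup>2) = (\<Sum>j\<in>{2..n}. (s (Suc 0) (Suc 0) j)\<^sup>2)"
    "(\<Sum>j\<in>{2..n}. (s j (Suc 0) (Suc 0))\<^sup>2) = (\<Sum>j\<in>{2..n}. (s (Suc 0) (Suc 0) j)\<^sup>2)"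
    "(\<Sum>i\<in>{2..n}. \<Sum>j\<in>{2..n}. (s i (Suc 0) j)\<^sup>2) = (\<Sum>i\<in>{2..n}. \<Sum>j\<in>{2..n}. (s (Suc 0) i j)\<^sup>2)"
    "(\<Sum>i\<in>{2..n}. \<Sum>j\<in>{2..n}. (s i j (Suc 0))\<^sup>2) = (\<Sum>i\<in>{2..n}. \<Sum>j\<in>{2..n}. (s (Suc 0) i j)\<^sup>2)"
    by (intro sum.cong refl; metis s1 s2)+
  show "(\<Sum>i\<in>{2..n}. \<Sum>r\<in>{1..n}. s 1 1 r * s i i r - (s 1 i r)\<^sup>2)
     = s 1 1 1 * (\<Sum>a\<in>A. s 1 a a) + (\<Sum>a\<in>A. s 1 1 a * (\<Sum>b\<in>A. s b b a)) - (\<Sum>a\<in>A. (s 1 1 a)\<^sup>2)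
       - (\<Sum>a\<in>A. \<Sum>b\<in>A. (s 1 a b)\<^sup>2)"
  proof -
    have "(\<Sum>i\<in>{2..n}. \<Sum>r\<in>{1..n}. s 1 1 r * s i i r - (s 1 i r)\<^sup>2)
       = (\<Sum>i\<in>A. s 1 1 1 * s 1 i i + (\<Sum>r\<in>A. s 1 1 r * s i i r) - (s 1 1 i)\<^sup>2 - (\<Sum>r\<in>A. (s 1 i r)\<^sup>2))"
      unfolding A_def by (simp only: split1[OF n1]) (simp add: e1 sum_subtractf sum.distrib)
    also have "\<dots> = s 1 1 1 * (\<Sum>a\<in>A. s 1 a a) + (\<Sum>r\<in>A. \<Sum>i\<in>A. s 1 1 r * s i i r) - (\<Sum>a\<in>A. (s 1 1 a)\<^sup>2)
       - (\<Sum>a\<in>A. \<Sum>b\<in>A. (s 1 a b)\<^sup>2)"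
      by (simp add: sum.distrib sum_subtractf sum_distrib_left) (rule sum.swap)
    finally show ?thesis by (simp add: sum_distrib_left)
  qed
  show "(\<Sum>r\<in>{1..n}. (\<Sum>i\<in>{1..n}. s i i r)\<^sup>2) = (s 1 1 1 + (\<Sum>a\<in>A. s 1 a a))\<^sup>2
       + (\<Sum>a\<in>A. (s 1 1 a + (\<Sum>b\<in>A. s b b a))\<^sup>2)"
    unfolding A_def by (simp only: split1[OF n1]) (simp add: e1)
  show "(\<Sum>i\<in>{1..n}. \<Sum>j\<in>{1..n}. \<Sum>r\<in>{1..n}. (s i j r)\<^sup>2) = (s 1 1 1)\<^sup>2 + 3 * (\<Sum>a\<in>A. (s 1 1 a)\<^sup>2)
       + 3 * (\<Sum>a\<in>A. \<Sum>b\<in>A. (s 1 a b)\<^sup>2) + (\<Sum>a\<in>A. \<Sum>b\<in>A. \<Sum>c\<in>A. (s a b c)\<^sup>2)"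
    unfolding A_def by (simp only: split1[OF n1]) (simp add: sum.distrib e1)
qed

lemma hQ:
  fixes s :: "nat \<Rightarrow> nat \<Rightarrow> nat \<Rightarrow> real"
  assumes n3: "n \<ge> 3" and s1: "\<And>i j k. s i j k = s j i k" and s2: "\<And>i j k. s i j k = s i k j"
  defines "Q \<equiv> (\<Sum>i\<in>{2..n}. \<Sum>r\<in>{1..n}. s 1 1 r * s i i r - (s 1 i r)\<^sup>2)
      - (real n - 1) * (\<Sum>j\<in>{1..n}. \<Sum>i\<in>{1..<j}. \<Sum>r\<in>{1..n}. s i i r * s j j r - (s i j r)\<^sup>2)
      + (3*real n-1)*(real n-2)/(2*(3*real n+5)) * (\<Sum>r\<in>{1..n}. (\<Sum>i\<in>{1..n}. s i i r)\<^sup>2)"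
  shows "Q \<ge> 0" and "Q = 0 \<Longrightarrow> s 1 1 1 = 0 \<and> (\<forall>a\<in>{2..n}. \<forall>b\<in>{2..n}. s 1 a b = 0)"
proof -
  define A where "A = {2..n}"
  define N2 where "N2 = (\<Sum>r\<in>{1..n}. (\<Sum>i\<in>{1..n}. s i i r)\<^sup>2)"
  define Hs where "Hs = (\<Sum>i\<in>{1..n}. \<Sum>j\<in>{1..n}. \<Sum>r\<in>{1..n}. (s i j r)\<^sup>2)"
  have tau: "(\<Sum>j\<in>{1..n}. \<Sum>i\<in>{1..<j}. \<Sum>r\<in>{1..n}. s i i r * s j j r - (s i j r)\<^sup>2) = (N2 - Hs)/2"
  proof -
    have sy: "(\<Sum>r\<in>{1..n}. s i i r * s j j r - (s i j r)\<^sup>2) = (\<Sum>r\<in>{1..n}. s j j r * s i i r - (s j i r)\<^sup>2)" for i j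
      by (intro sum.cong refl) (metis s1 mult.commute)
    have "(\<Sum>i\<in>{1..n}. \<Sum>j\<in>{1..n}. \<Sum>r\<in>{1..n}. s i i r * s j j r) = (\<Sum>r\<in>{1..n}. \<Sum>i\<in>{1..n}. \<Sum>j\<in>{1..n}. s i i r * s j j r)"
      by (rule trans[OF sum.cong[OF refl] sum.swap], rule sum.swap)
    also have "\<dots> = N2" unfolding N2_def by (simp add: power2_eq_square sum_product)
    finally have e: "(\<Sum>i\<in>{1..n}. \<Sum>j\<in>{1..n}. \<Sum>r\<in>{1..n}. s i i r * s j j r) = N2" .
    show ?thesis
      apply (subst pairs_sum[where f="\<lambda>i j. \<Sum>r\<in>{1..n}. s i i r * s j j r - (s i j r)\<^sup>2"])
      using sy e unfolding Hs_def by (simp_all add: sum_subtractf power2_eq_square)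
  qed
  define x where "x = s 1 1 1"
  define t where "t = (\<Sum>a\<in>A. s 1 a a)"
  define P where "P = (\<Sum>a\<in>A. \<Sum>b\<in>A. (s 1 a b)\<^sup>2)"
  define y where "y = (\<lambda>a. s 1 1 a)"
  define w where "w = (\<lambda>a. \<Sum>b\<in>A. s b b a)"
  define S where "S = (\<Sum>a\<in>A. \<Sum>b\<in>A. \<Sum>c\<in>A. (s a b c)\<^sup>2)"
  note sp = s_parts[OF n3 s1 s2]
  have cardA: "real (card A) = real n - 1" unfolding A_def using n3 by simp
  have tP: "t\<^sup>2 \<le> (real n - 1) * P"
  proof -
    have "t\<^sup>2 \<le> real (card A) * (\<Sum>a\<in>A. (s 1 a a)\<^sup>2)" unfolding t_def by (rule cs_sum) (simp add: A_def)
    moreover have "(\<Sum>a\<in>A. (s 1 a a)\<^sup>2) \<le> P" unfolding P_def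
      by (intro sum_mono member_le_sum) (auto simp: A_def)
    ultimately show ?thesis using cardA n3
      by (smt (verit, ccfv_SIG) mult_left_mono of_nat_0_le_iff)
  qed
  have tr: "3*(\<Sum>a\<in>A. (w a)\<^sup>2) \<le> (real n+1)*S"
    using trace_ineq[OF _ s1 s2, where A=A] cardA unfolding w_def S_def by (simp add: A_def add.commute)
  have QQ: "Q = (x*t + (\<Sum>a\<in>A. y a * w a) - (\<Sum>a\<in>A. (y a)\<^sup>2) - P)
     - (real n-1)/2 * (((x+t)\<^sup>2 + (\<Sum>a\<in>A. (y a + w a)\<^sup>2)) - (x\<^sup>2 + 3*(\<Sum>a\<in>A. (y a)\<^sup>2) + 3*P + S))
     + (3*real n-1)*(real n-2)/(2*(3*real n+5)) * ((x+t)\<^sup>2 + (\<Sum>a\<in>A. (y a + w a)\<^sup>2))"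
  proof -
    have gen: "\<And>Q R a u v c U V::real. Q = R - a*((u-v)/2) + c*u \<Longrightarrow> u = U \<Longrightarrow> v = V \<Longrightarrow> Q = R - a/2*(U - V) + c*U"
      by simp
    define Ric where "Ric = (\<Sum>i\<in>{2..n}. \<Sum>r\<in>{1..n}. s 1 1 r * s i i r - (s 1 i r)\<^sup>2)"
    have RicE: "Ric = s 1 1 1 * (\<Sum>a\<in>A. s 1 a a) + (\<Sum>a\<in>A. s 1 1 a * (\<Sum>b\<in>A. s b b a)) - (\<Sum>a\<in>A. (s 1 1 a)\<^sup>2)
       - (\<Sum>a\<in>A. \<Sum>b\<in>A. (s 1 a b)\<^sup>2)" unfolding Ric_def A_def by (rule sp(1))
    have Q1: "Q = Ric - (real n - 1) * ((N2 - Hs)/2)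
       + (3*real n-1)*(real n-2)/(2*(3*real n+5)) * N2"
      unfolding Q_def tau N2_def Ric_def by (rule refl)
    show ?thesis unfolding x_def t_def P_def y_def w_def S_def A_def
      using Q1 unfolding N2_def Hs_def sp(2) sp(3) RicE[unfolded A_def] by (simp add: divide_simps)
  qed
  have N3: "real n \<ge> 3" using n3 by simp
  note c = core[OF N3 tP tr, of x y, folded QQ]
  show "Q \<ge> 0" by (rule c(1))
  assume "Q = 0"
  hence "x = 0 \<and> P = 0" by (rule c(2))
  moreover have "P = 0 \<Longrightarrow> \<forall>a\<in>{2..n}. \<forall>b\<in>{2..n}. s 1 a b = 0"
    unfolding P_def A_def by (simp add: sum_nonneg_eq_0_iff sum_nonneg)
  ultimately show "s 1 1 1 = 0 \<and> (\<forall>a\<in>{2..n}. \<forall>b\<in>{2..n}. s 1 a b = 0)" unfolding x_def by simp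
qed




lemma lagrange:
  fixes f g :: "nat \<Rightarrow> real"
  shows "(\<Sum>i\<in>I. \<Sum>j\<in>I. (f j * g i - f i * g j)\<^sup>2) = 2 * ((\<Sum>i\<in>I. (f i)\<^sup>2) * (\<Sum>i\<in>I. (g i)\<^sup>2) - (\<Sum>i\<in>I. f i * g i)\<^sup>2)"
proof -
  have "(\<Sum>i\<in>I. \<Sum>j\<in>I. (f j * g i - f i * g j)\<^sup>2)
     = (\<Sum>i\<in>I. \<Sum>j\<in>I. (g i)\<^sup>2 * (f j)\<^sup>2 + (f i)\<^sup>2 * (g j)\<^sup>2 - 2 * ((f i * g i) * (f j * g j)))"
    by (intro sum.cong refl) (simp add: power2_eq_square algebra_simps)
  also have "\<dots> = (\<Sum>i\<in>I. \<Sum>j\<in>I. (g i)\<^sup>2 * (f j)\<^sup>2) + (\<Sum>i\<in>I. \<Sum>j\<in>I. (f i)\<^sup>2 * (g j)\<^sup>2)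
       - 2 * (\<Sum>i\<in>I. \<Sum>j\<in>I. (f i * g i) * (f j * g j))"
    by (simp add: sum.distrib sum_subtractf sum_distrib_left)
  also have "\<dots> = (\<Sum>i\<in>I. (g i)\<^sup>2) * (\<Sum>i\<in>I. (f i)\<^sup>2) + (\<Sum>i\<in>I. (f i)\<^sup>2) * (\<Sum>i\<in>I. (g i)\<^sup>2)
       - 2 * ((\<Sum>i\<in>I. f i * g i) * (\<Sum>i\<in>I. f i * g i))"
    by (simp only: sum_product)
  finally show ?thesis by (simp add: power2_eq_square algebra_simps)
qed

locale qch =
  fixes n :: nat
    and J :: "'a::euclidean_space \<Rightarrow> 'a"
    and xi :: 'a
    and a b c :: real
    and Rbar RN :: "'a \<Rightarrow> 'a \<Rightarrow> 'a \<Rightarrow> 'a \<Rightarrow> real"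
    and T :: "'a set"
    and h :: "'a \<Rightarrow> 'a \<Rightarrow> 'a"
  assumes n3: "n \<ge> 3"
    and J_lin: "linear J"
    and J_sq: "\<And>v. J (J v) = - v"
    and J_isom: "\<And>u v. inner (J u) (J v) = inner u v"
    and xi_unit: "norm xi = 1"
    and QCH: "\<And>X Y Z U. Rbar X Y Z U =
               a * piT J X Y Z U + b * PhiT J xi X Y Z U + c * PsiT J xi X Y Z U"
    and T_sub: "subspace T"
    and Lagr: "J ` T = {v. \<forall>w\<in>T. inner v w = 0}"
    and h_sym: "\<And>x y. x \<in> T \<Longrightarrow> y \<in> T \<Longrightarrow> h x y = h y x"
    and h_add: "\<And>x y z. x \<in> T \<Longrightarrow> y \<in> T \<Longrightarrow> z \<in> T \<Longrightarrow> h (x + y) z = h x z + h y z"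
    and h_scale: "\<And>r x z. x \<in> T \<Longrightarrow> z \<in> T \<Longrightarrow> h (r *\<^sub>R x) z = r *\<^sub>R h x z"
    and h_normal: "\<And>x y w. x \<in> T \<Longrightarrow> y \<in> T \<Longrightarrow> w \<in> T \<Longrightarrow> inner (h x y) w = 0"
    and h_Kaehler: "\<And>x y z. x \<in> T \<Longrightarrow> y \<in> T \<Longrightarrow> z \<in> T \<Longrightarrow>
                      inner (h x y) (J z) = inner (h x z) (J y)"
    and Gauss: "\<And>X Y Z U. X \<in> T \<Longrightarrow> Y \<in> T \<Longrightarrow> Z \<in> T \<Longrightarrow> U \<in> T \<Longrightarrow>
                  RN X Y Z U = Rbar X Y Z U + inner (h X U) (h Y Z) - inner (h X Z) (h Y U)"
begin

lemma J_perp: "x \<in> T \<Longrightarrow> y \<in> T \<Longrightarrow> inner (J x) y = 0"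
  using Lagr by blast

lemma perp_J: assumes "\<And>w. w \<in> T \<Longrightarrow> inner v w = 0" shows "\<exists>w\<in>T. v = J w"
proof -
  have "v \<in> J ` T" unfolding Lagr using assms by blast
  thus ?thesis by blast
qed

lemma J_skew: "inner (J u) v = - inner u (J v)"
proof -
  have "inner (J u) v = inner (J (J u)) (J v)" by (rule J_isom[symmetric])
  thus ?thesis by (simp add: J_sq)
qed

lemma onb_in: "onb T n e \<Longrightarrow> i \<in> {1..n} \<Longrightarrow> e i \<in> T"
  unfolding onb_def by (metis imageI span_base)

lemma onb_inner: "onb T n e \<Longrightarrow> i \<in> {1..n} \<Longrightarrow> j \<in> {1..n} \<Longrightarrow> inner (e i) (e j) = (if i = j then 1 else 0)"
  unfolding onb_def by blast

lemma inner_comb: "onb T n e \<Longrightarrow> j \<in> {1..n} \<Longrightarrow> inner (\<Sum>i\<in>{1..n}. f i *\<^sub>R e i) (e j) = f j"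
proof -
  assume o: "onb T n e" and j: "j \<in> {1..n}"
  have "inner (\<Sum>i\<in>{1..n}. f i *\<^sub>R e i) (e j) = (\<Sum>i\<in>{1..n}. f i * (if i = j then 1 else 0))"
    by (simp add: inner_sum_left onb_inner[OF o _ j])
  also have "\<dots> = f j" using j by (simp add: if_distrib cong: if_cong)
  finally show ?thesis .
qed

lemma comb_in: "onb T n e \<Longrightarrow> (\<Sum>i\<in>{1..n}. f i *\<^sub>R e i) \<in> T"
  using T_sub onb_in by (intro subspace_sum subspace_scale) auto

lemma expand: assumes o: "onb T n e" and w: "w \<in> T"
  shows "w = (\<Sum>i\<in>{1..n}. inner w (e i) *\<^sub>R e i)"
proof -
  define p where "p = w - (\<Sum>i\<in>{1..n}. inner w (e i) *\<^sub>R e i)"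
  have pT: "p \<in> span (e ` {1..n})" using o w comb_in[OF o] T_sub unfolding p_def onb_def
    by (metis span_diff span_eq_iff)
  have "orthogonal p x" if "x \<in> e ` {1..n}" for x
  proof -
    obtain j where j: "j \<in> {1..n}" "x = e j" using \<open>x \<in> e ` {1..n}\<close> by blast
    show ?thesis unfolding orthogonal_def p_def j(2) using inner_comb[OF o j(1)]
      by (simp add: inner_diff_left)
  qed
  hence "orthogonal p p" using orthogonal_to_span[OF pT] by blast
  hence "p = 0" by (simp add: orthogonal_def)
  thus ?thesis unfolding p_def by simp
qed

lemma inner_expand: "onb T n e \<Longrightarrow> w \<in> T \<Longrightarrow> inner w v = (\<Sum>i\<in>{1..n}. inner w (e i) * inner (e i) v)"
  by (subst expand, assumption+) (simp add: inner_sum_left)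

lemma inner_combs: "onb T n e \<Longrightarrow> inner (\<Sum>i\<in>{1..n}. f i *\<^sub>R e i) (\<Sum>i\<in>{1..n}. g i *\<^sub>R e i) = (\<Sum>i\<in>{1..n}. f i * g i)"
proof -
  assume o: "onb T n e"
  have "inner (\<Sum>i\<in>{1..n}. f i *\<^sub>R e i) (\<Sum>i\<in>{1..n}. g i *\<^sub>R e i) = (\<Sum>j\<in>{1..n}. g j * inner (\<Sum>i\<in>{1..n}. f i *\<^sub>R e i) (e j))"
    by (simp add: inner_sum_right)
  also have "\<dots> = (\<Sum>j\<in>{1..n}. f j * g j)" using inner_comb[OF o] by (simp add: mult.commute)
  finally show ?thesis .
qed

lemma norm_comb: assumes o: "onb T n e" shows "(norm (\<Sum>i\<in>{1..n}. f i *\<^sub>R e i))\<^sup>2 = (\<Sum>i\<in>{1..n}. (f i)\<^sup>2)"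
proof -
  have "(norm (\<Sum>i\<in>{1..n}. f i *\<^sub>R e i))\<^sup>2 = inner (\<Sum>i\<in>{1..n}. f i *\<^sub>R e i) (\<Sum>i\<in>{1..n}. f i *\<^sub>R e i)"
    by (rule power2_norm_eq_inner)
  also have "\<dots> = (\<Sum>i\<in>{1..n}. f i * f i)" by (rule inner_combs[OF o])
  finally show ?thesis by (simp add: power2_eq_square)
qed


definition sT :: "(nat \<Rightarrow> 'a) \<Rightarrow> nat \<Rightarrow> nat \<Rightarrow> nat \<Rightarrow> real" where
  "sT e i j k = (if i \<in> {1..n} \<and> j \<in> {1..n} \<and> k \<in> {1..n} then inner (h (e i) (e j)) (J (e k)) else 0)"

lemma s_sym1: "onb T n e \<Longrightarrow> sT e i j k = sT e j i k"
  unfolding sT_def using h_sym onb_in by auto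

lemma s_sym2: "onb T n e \<Longrightarrow> sT e i j k = sT e i k j"
  unfolding sT_def using h_Kaehler onb_in by auto

lemma h_J: "x \<in> T \<Longrightarrow> y \<in> T \<Longrightarrow> \<exists>w\<in>T. h x y = J w"
  by (rule perp_J) (rule h_normal)

lemma h_inner:
  assumes o: "onb T n e" and i: "i \<in> {1..n}" and j: "j \<in> {1..n}" and k: "k \<in> {1..n}" and l: "l \<in> {1..n}"
  shows "inner (h (e i) (e j)) (h (e k) (e l)) = (\<Sum>r\<in>{1..n}. sT e i j r * sT e k l r)"
proof -
  obtain w where w: "w \<in> T" "h (e i) (e j) = J w" using h_J onb_in[OF o i] onb_in[OF o j] by blast
  obtain w' where w': "w' \<in> T" "h (e k) (e l) = J w'" using h_J onb_in[OF o k] onb_in[OF o l] by blast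
  have "inner (h (e i) (e j)) (h (e k) (e l)) = inner w w'" unfolding w(2) w'(2) by (rule J_isom)
  also have "\<dots> = (\<Sum>r\<in>{1..n}. inner w (e r) * inner (e r) w')" by (rule inner_expand[OF o w(1)])
  also have "\<dots> = (\<Sum>r\<in>{1..n}. sT e i j r * sT e k l r)"
  proof (intro sum.cong refl)
    fix r assume r: "r \<in> {1..n}"
    have "sT e i j r = inner w (e r)" unfolding sT_def using i j r w(2) J_isom by simp
    moreover have "sT e k l r = inner (e r) w'" unfolding sT_def using k l r w'(2) J_isom by (simp add: inner_commute)
    ultimately show "inner w (e r) * inner (e r) w' = sT e i j r * sT e k l r" by simp
  qed
  finally show ?thesis .
qed

lemma xi_sum:
  assumes o: "onb T n e"
  shows "(\<Sum>i\<in>{1..n}. (inner xi (e i))\<^sup>2 + (inner (J xi) (e i))\<^sup>2) = 1"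
proof -
  define q where "q = tproj n e xi"
  have qT: "q \<in> T" unfolding q_def tproj_def by (rule comb_in[OF o])
  define p where "p = xi - q"
  have "inner p w = 0" if w: "w \<in> T" for w
  proof -
    have "inner q w = (\<Sum>i\<in>{1..n}. inner xi (e i) * inner (e i) w)"
      unfolding q_def tproj_def by (simp add: inner_sum_left)
    also have "\<dots> = inner w xi" using inner_expand[OF o w, of xi] by (simp add: inner_commute mult.commute)
    finally have "inner q w = inner xi w" by (simp add: inner_commute)
    thus ?thesis unfolding p_def by (simp add: inner_diff_left)
  qed
  then obtain u where u: "u \<in> T" "p = J u" using perp_J by blast
  have xiq: "xi = q + p" unfolding p_def by simp
  have "inner q p = 0" using J_perp[OF u(1) qT] u(2) by (simp add: inner_commute)
  hence "1 = (norm q)\<^sup>2 + (norm p)\<^sup>2" using xi_unit xiq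
    by (metis norm_add_Pythagorean orthogonal_def power_one)
  also have "(norm q)\<^sup>2 = (\<Sum>i\<in>{1..n}. (inner xi (e i))\<^sup>2)" unfolding q_def tproj_def by (rule norm_comb[OF o])
  also have "(norm p)\<^sup>2 = (\<Sum>i\<in>{1..n}. (inner (J xi) (e i))\<^sup>2)"
  proof -
    have "(norm p)\<^sup>2 = inner u u" unfolding u(2) power2_norm_eq_inner by (rule J_isom)
    also have "\<dots> = (\<Sum>i\<in>{1..n}. inner u (e i) * inner (e i) u)" by (rule inner_expand[OF o u(1)])
    also have "\<dots> = (\<Sum>i\<in>{1..n}. (inner (J xi) (e i))\<^sup>2)"
    proof (intro sum.cong refl)
      fix i assume i: "i \<in> {1..n}"
      have "J xi = J q + J p" unfolding xiq using J_lin by (simp add: linear_add)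
      hence "inner (J xi) (e i) = inner (J q) (e i) + inner (J (J u)) (e i)" using u(2) by (simp add: inner_add_left)
      also have "\<dots> = - inner u (e i)" using J_perp[OF qT onb_in[OF o i]] J_sq by simp
      finally show "inner u (e i) * inner (e i) u = (inner (J xi) (e i))\<^sup>2"
        by (simp add: power2_eq_square inner_commute)
    qed
    finally show ?thesis .
  qed
  finally show ?thesis by (simp add: sum.distrib)
qed

lemma RN_formula:
  assumes o: "onb T n e" and i: "i \<in> {1..n}" and j: "j \<in> {1..n}" and ij: "i \<noteq> j"
  shows "RN (e i) (e j) (e j) (e i) = a/4 + b/8 * ((inner xi (e i))\<^sup>2 + (inner (J xi) (e i))\<^sup>2 + (inner xi (e j))\<^sup>2 + (inner (J xi) (e j))\<^sup>2)
     + c * (inner xi (e j) * inner (J xi) (e i) - inner xi (e i) * inner (J xi) (e j))\<^sup>2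
     + (\<Sum>r\<in>{1..n}. sT e i i r * sT e j j r - (sT e i j r)\<^sup>2)"
proof -
  have ei: "e i \<in> T" and ej: "e j \<in> T" using onb_in[OF o] i j by auto
  have in1: "inner (e i) (e i) = 1" "inner (e j) (e j) = 1" "inner (e i) (e j) = 0" "inner (e j) (e i) = 0"
    using onb_inner[OF o] i j ij by auto
  have in2: "inner (J (e i)) (e j) = 0" "inner (J (e j)) (e i) = 0" "inner (J (e i)) (e i) = 0" "inner (J (e j)) (e j) = 0"
    using J_perp ei ej by auto
  have hh: "inner (h (e i) (e i)) (h (e j) (e j)) - inner (h (e i) (e j)) (h (e j) (e i))
      = (\<Sum>r\<in>{1..n}. sT e i i r * sT e j j r - (sT e i j r)\<^sup>2)"
  proof -
    have "inner (h (e i) (e j)) (h (e j) (e i)) = (\<Sum>r\<in>{1..n}. (sT e i j r)\<^sup>2)"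
      using h_inner[OF o i j j i] s_sym1[OF o, of j i] by (simp add: power2_eq_square)
    thus ?thesis using h_inner[OF o i i j j] by (simp add: sum_subtractf)
  qed
  show ?thesis
    unfolding Gauss[OF ei ej ej ei] QCH piT_def PhiT_def PsiT_def Let_def hh[symmetric]
    by (simp add: in1 in2 power2_eq_square algebra_simps)
qed


definition rhsL :: "(nat \<Rightarrow> 'a) \<Rightarrow> real" where
  "rhsL = (\<lambda>e::nat \<Rightarrow> 'a.
      let X = e 1; etaT = tproj n e xi; etT = tproj n e (J xi) in
        - (real (n - 2) * real (n - 1) * real (n + 1) / 8) * a
        - (real (n - 2) / 8) * (real n - ((inner xi X)\<^sup>2 + (inner (J xi) X)\<^sup>2)) * b
        - ((real n - 1) * ((norm etaT)\<^sup>2 * (norm etT)\<^sup>2 - (inner etaT etT)\<^sup>2)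
           - (norm (inner xi X *\<^sub>R etT - inner (J xi) X *\<^sub>R etaT))\<^sup>2) * c
        + (real n - 1) * tauB RN n e
        - (real (3 * n - 1) * real (n - 2) * (real n)\<^sup>2 / (2 * real (3 * n + 5)))
            * (norm (meanH h n e))\<^sup>2)"

definition Qh :: "(nat \<Rightarrow> nat \<Rightarrow> nat \<Rightarrow> real) \<Rightarrow> real" where
  "Qh s = (\<Sum>i\<in>{2..n}. \<Sum>r\<in>{1..n}. s 1 1 r * s i i r - (s 1 i r)\<^sup>2)
      - (real n - 1) * (\<Sum>j\<in>{1..n}. \<Sum>i\<in>{1..<j}. \<Sum>r\<in>{1..n}. s i i r * s j j r - (s i j r)\<^sup>2)
      + (3*real n-1)*(real n-2)/(2*(3*real n+5)) * (\<Sum>r\<in>{1..n}. (\<Sum>i\<in>{1..n}. s i i r)\<^sup>2)"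

lemma main_eq:
  assumes o: "onb T n e"
  shows "RicB RN n e - rhsL e = Qh (sT e)"
proof -
  define s where "s = sT e"
  define \<eta> where "\<eta> = (\<lambda>i. inner xi (e i))"
  define \<zeta> where "\<zeta> = (\<lambda>i. inner (J xi) (e i))"
  define \<alpha> where "\<alpha> = (\<lambda>i. (\<eta> i)\<^sup>2 + (\<zeta> i)\<^sup>2)"
  define G where "G = (\<lambda>i j. a/4 + b/8 * (\<alpha> i + \<alpha> j) + c * (\<eta> j * \<zeta> i - \<eta> i * \<zeta> j)\<^sup>2)"
  define H where "H = (\<lambda>i j. \<Sum>r\<in>{1..n}. s i i r * s j j r - (s i j r)\<^sup>2)"
  have n1: "1 \<le> n" using n3 by simp
  have KK: "RN (e i) (e j) (e j) (e i) = G i j + H i j" if "i \<in> {1..n}" "j \<in> {1..n}" "i \<noteq> j" for i j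
    using RN_formula[OF o that] unfolding G_def H_def s_def \<alpha>_def \<eta>_def \<zeta>_def by (simp add: algebra_simps)
  have alpha1: "(\<Sum>i\<in>{1..n}. \<alpha> i) = 1" using xi_sum[OF o] unfolding \<alpha>_def \<eta>_def \<zeta>_def .
  have Ric: "RicB RN n e = (\<Sum>i\<in>{2..n}. G 1 i) + (\<Sum>i\<in>{2..n}. H 1 i)"
    unfolding RicB_def using KK[of 1] by (simp add: sum.distrib)
  have R1: "(\<Sum>i\<in>{2..n}. G 1 i) = (real n - 1) * a/4 + b/8 * ((real n - 2) * \<alpha> 1 + 1)
       + c * (\<Sum>i\<in>{1..n}. (\<eta> 1 * \<zeta> i - \<zeta> 1 * \<eta> i)\<^sup>2)"
  proof -
    have a2: "(\<Sum>i\<in>{2..n}. \<alpha> i) = 1 - \<alpha> 1" using alpha1 split1[OF n1, of \<alpha>] by simp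
    have c2: "(\<Sum>i\<in>{2..n}. (\<eta> i * \<zeta> 1 - \<eta> 1 * \<zeta> i)\<^sup>2) = (\<Sum>i\<in>{1..n}. (\<eta> 1 * \<zeta> i - \<zeta> 1 * \<eta> i)\<^sup>2)"
    proof -
      have "(\<Sum>i\<in>{2..n}. (\<eta> i * \<zeta> 1 - \<eta> 1 * \<zeta> i)\<^sup>2) = (\<Sum>i\<in>{2..n}. (\<eta> 1 * \<zeta> i - \<zeta> 1 * \<eta> i)\<^sup>2)"
        by (intro sum.cong refl) (simp add: power2_eq_square algebra_simps)
      also have "\<dots> = (\<Sum>i\<in>{1..n}. (\<eta> 1 * \<zeta> i - \<zeta> 1 * \<eta> i)\<^sup>2)"
        using split1[OF n1, of "\<lambda>i. (\<eta> 1 * \<zeta> i - \<zeta> 1 * \<eta> i)\<^sup>2"] by simp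
      finally show ?thesis .
    qed
    have card: "real (card {2..n}) = real n - 1" using n1 by simp
    have "(\<Sum>i\<in>{2..n}. G 1 i) = real (card {2..n}) * (a/4 + b/8 * \<alpha> 1) + b/8 * (\<Sum>i\<in>{2..n}. \<alpha> i)
        + c * (\<Sum>i\<in>{2..n}. (\<eta> i * \<zeta> 1 - \<eta> 1 * \<zeta> i)\<^sup>2)"
    proof -
      have "(\<Sum>i\<in>{2..n}. G 1 i) = (\<Sum>i\<in>{2..n}. (a/4 + b/8 * \<alpha> 1) + b/8 * \<alpha> i + c * (\<eta> i * \<zeta> 1 - \<eta> 1 * \<zeta> i)\<^sup>2)"
        by (intro sum.cong refl) (simp add: G_def algebra_simps)
      also have "\<dots> = real (card {2..n}) * (a/4 + b/8 * \<alpha> 1) + b/8 * (\<Sum>i\<in>{2..n}. \<alpha> i)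
        + c * (\<Sum>i\<in>{2..n}. (\<eta> i * \<zeta> 1 - \<eta> 1 * \<zeta> i)\<^sup>2)"
        by (simp only: sum.distrib sum_distrib_left[symmetric] sum_constant) (simp add: algebra_simps)
      finally show ?thesis .
    qed
    thus ?thesis unfolding a2 c2 card by (simp add: field_simps)
  qed
  have tau: "tauB RN n e = (\<Sum>j\<in>{1..n}. \<Sum>i\<in>{1..<j}. G i j) + (\<Sum>j\<in>{1..n}. \<Sum>i\<in>{1..<j}. H i j)"
    unfolding tauB_def sum.distrib[symmetric]
    by (intro sum.cong refl) (rule KK, auto)
  have R2: "(\<Sum>j\<in>{1..n}. \<Sum>i\<in>{1..<j}. G i j) = real n * (real n - 1) * a / 8 + (real n - 1) * b / 8
      + c * ((\<Sum>i\<in>{1..n}. (\<eta> i)\<^sup>2) * (\<Sum>i\<in>{1..n}. (\<zeta> i)\<^sup>2) - (\<Sum>i\<in>{1..n}. \<eta> i * \<zeta> i)\<^sup>2)"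
  proof -
    have Gs: "G i j = G j i" for i j unfolding G_def by (simp add: power2_eq_square algebra_simps)
    have lag: "(\<Sum>i\<in>{1..n}. \<Sum>j\<in>{1..n}. (\<eta> j * \<zeta> i - \<eta> i * \<zeta> j)\<^sup>2)
       = 2 * ((\<Sum>i\<in>{1..n}. (\<eta> i)\<^sup>2) * (\<Sum>i\<in>{1..n}. (\<zeta> i)\<^sup>2) - (\<Sum>i\<in>{1..n}. \<eta> i * \<zeta> i)\<^sup>2)"
      by (rule lagrange)
    have "(\<Sum>i\<in>{1..n}. \<Sum>j\<in>{1..n}. G i j) = real n * real n * a/4 + b/8 * (2 * real n)
        + c * (\<Sum>i\<in>{1..n}. \<Sum>j\<in>{1..n}. (\<eta> j * \<zeta> i - \<eta> i * \<zeta> j)\<^sup>2)"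
    proof -
      have "(\<Sum>i\<in>{1..n}. \<Sum>j\<in>{1..n}. G i j) = (\<Sum>i\<in>{1..n}. \<Sum>j\<in>{1..n}. a/4 + b/8 * \<alpha> i + b/8 * \<alpha> j
          + c * (\<eta> j * \<zeta> i - \<eta> i * \<zeta> j)\<^sup>2)"
        unfolding G_def by (intro sum.cong refl) (simp add: algebra_simps add_divide_distrib)
      also have "\<dots> = real (card {1..n}) * real (card {1..n}) * (a/4) + real (card {1..n}) * (b/8 * (\<Sum>i\<in>{1..n}. \<alpha> i))
          + real (card {1..n}) * (b/8 * (\<Sum>i\<in>{1..n}. \<alpha> i))
          + c * (\<Sum>i\<in>{1..n}. \<Sum>j\<in>{1..n}. (\<eta> j * \<zeta> i - \<eta> i * \<zeta> j)\<^sup>2)"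
        by (simp only: sum.distrib sum_constant sum_distrib_left[symmetric])
      finally show ?thesis using alpha1 by (simp add: algebra_simps)
    qed
    moreover have "(\<Sum>i\<in>{1..n}. G i i) = real n * a/4 + b/4"
    proof -
      have "(\<Sum>i\<in>{1..n}. G i i) = (\<Sum>i\<in>{1..n}. a/4 + b/4 * \<alpha> i)"
        unfolding G_def by (intro sum.cong refl) (simp add: algebra_simps)
      also have "\<dots> = real (card {1..n}) * (a/4) + b/4 * (\<Sum>i\<in>{1..n}. \<alpha> i)"
        by (simp only: sum.distrib sum_constant sum_distrib_left[symmetric])
      finally show ?thesis using alpha1 by simp
    qed
    ultimately show ?thesis unfolding pairs_sum[of G, OF Gs] lag by (simp add: field_simps)
  qed
  have tpx: "tproj n e xi = (\<Sum>i\<in>{1..n}. \<eta> i *\<^sub>R e i)" unfolding tproj_def \<eta>_def ..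
  have tpj: "tproj n e (J xi) = (\<Sum>i\<in>{1..n}. \<zeta> i *\<^sub>R e i)" unfolding tproj_def \<zeta>_def ..
  have N1: "(norm (tproj n e xi))\<^sup>2 = (\<Sum>i\<in>{1..n}. (\<eta> i)\<^sup>2)" unfolding tpx by (rule norm_comb[OF o])
  have N2: "(norm (tproj n e (J xi)))\<^sup>2 = (\<Sum>i\<in>{1..n}. (\<zeta> i)\<^sup>2)" unfolding tpj by (rule norm_comb[OF o])
  have N3: "inner (tproj n e xi) (tproj n e (J xi)) = (\<Sum>i\<in>{1..n}. \<eta> i * \<zeta> i)" unfolding tpx tpj by (rule inner_combs[OF o])
  have N4: "(norm (\<eta> 1 *\<^sub>R tproj n e (J xi) - \<zeta> 1 *\<^sub>R tproj n e xi))\<^sup>2 = (\<Sum>i\<in>{1..n}. (\<eta> 1 * \<zeta> i - \<zeta> 1 * \<eta> i)\<^sup>2)"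
  proof -
    have "\<eta> 1 *\<^sub>R tproj n e (J xi) - \<zeta> 1 *\<^sub>R tproj n e xi = (\<Sum>i\<in>{1..n}. (\<eta> 1 * \<zeta> i - \<zeta> 1 * \<eta> i) *\<^sub>R e i)"
      unfolding tpx tpj by (simp add: scaleR_sum_right sum_subtractf scaleR_diff_left)
    thus ?thesis using norm_comb[OF o, of "\<lambda>i. \<eta> 1 * \<zeta> i - \<zeta> 1 * \<eta> i"] by simp
  qed
  have MH: "(norm (meanH h n e))\<^sup>2 = (\<Sum>r\<in>{1..n}. (\<Sum>i\<in>{1..n}. s i i r)\<^sup>2) / (real n)\<^sup>2"
  proof -
    have "(norm (\<Sum>i\<in>{1..n}. h (e i) (e i)))\<^sup>2 = (\<Sum>i\<in>{1..n}. \<Sum>j\<in>{1..n}. inner (h (e i) (e i)) (h (e j) (e j)))"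
      by (simp add: power2_norm_eq_inner inner_sum_left inner_sum_right) (rule sum.swap)
    also have "\<dots> = (\<Sum>i\<in>{1..n}. \<Sum>j\<in>{1..n}. \<Sum>r\<in>{1..n}. s i i r * s j j r)"
      unfolding s_def by (intro sum.cong refl h_inner[OF o]) auto
    also have "\<dots> = (\<Sum>r\<in>{1..n}. \<Sum>i\<in>{1..n}. \<Sum>j\<in>{1..n}. s i i r * s j j r)"
      by (rule trans[OF sum.cong[OF refl sum.swap] sum.swap])
    also have "\<dots> = (\<Sum>r\<in>{1..n}. (\<Sum>i\<in>{1..n}. s i i r)\<^sup>2)"
      by (simp add: power2_eq_square sum_product)
    finally show ?thesis unfolding meanH_def by (simp add: power_divide)
  qed
  have conv: "real (n - 2) = real n - 2" "real (n - 1) = real n - 1" "real (3 * n - 1) = 3 * real n - 1"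
    using n3 by auto
  have e1: "e 1 = e 1" ..
  have nz0: "real n \<noteq> 0" using n3 by simp
  have mh2: "(3 * real n - 1) * (real n - 2) * (real n)\<^sup>2 / (2 * (3 * real n + 5)) * (X / (real n)\<^sup>2)
       = (3*real n-1)*(real n-2)/(2*(3*real n+5)) * X" for X
  proof -
    have g: "A * m / D * (Y / m) = A / D * Y" if "m \<noteq> 0" for A m D Y :: real
      using that by (cases "D = 0") (simp_all add: field_simps)
    show ?thesis by (rule g) (use nz0 in simp)
  qed
  have rhsE0: "rhsL e = - ((real n - 2) * (real n - 1) * (real n + 1) / 8) * a
        - ((real n - 2) / 8) * (real n - \<alpha> 1) * b
        - ((real n - 1) * ((\<Sum>i\<in>{1..n}. (\<eta> i)\<^sup>2) * (\<Sum>i\<in>{1..n}. (\<zeta> i)\<^sup>2) - (\<Sum>i\<in>{1..n}. \<eta> i * \<zeta> i)\<^sup>2)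
           - (\<Sum>i\<in>{1..n}. (\<eta> 1 * \<zeta> i - \<zeta> 1 * \<eta> i)\<^sup>2)) * c
        + (real n - 1) * tauB RN n e
        - ((3 * real n - 1) * (real n - 2) * (real n)\<^sup>2 / (2 * (3 * real n + 5)))
            * ((\<Sum>r\<in>{1..n}. (\<Sum>i\<in>{1..n}. s i i r)\<^sup>2) / (real n)\<^sup>2)"
    unfolding rhsL_def Let_def N1 N2 N3 MH conv
    using N4 unfolding \<eta>_def \<zeta>_def \<alpha>_def by simp
  note rhsE = rhsE0[unfolded mh2]
  have Qh_eq: "Qh s = (\<Sum>i\<in>{2..n}. H 1 i) - (real n - 1) * (\<Sum>j\<in>{1..n}. \<Sum>i\<in>{1..<j}. H i j)
      + (3*real n-1)*(real n-2)/(2*(3*real n+5)) * (\<Sum>r\<in>{1..n}. (\<Sum>i\<in>{1..n}. s i i r)\<^sup>2)"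
    unfolding Qh_def H_def ..
  have nz: "real n \<noteq> 0" using n3 by simp
  show ?thesis
    unfolding s_def[symmetric] Qh_eq rhsE Ric R1 tau R2
    using nz by (simp add: field_simps)
qed


end


context qch begin
lemma onb_exists:
  assumes "dim T = n"
  obtains e where "onb T n e"
proof -
  obtain B where B: "B \<subseteq> T" "pairwise orthogonal B" "\<And>x. x \<in> B \<Longrightarrow> norm x = 1"
    "independent B" "card B = dim T" "span B = T"
    by (rule orthonormal_basis_subspace[OF T_sub]) auto
  have cB: "card B = n" using B(5) assms by simp
  hence "card B > 0" using n3 by simp
  hence fin: "finite B" using card_gt_0_iff by blast
  obtain f where f: "bij_betw f {1..n} B" using ex_bij_betw_nat_finite_1[OF fin] unfolding cB by blast
  have "onb T n f" unfolding onb_def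
  proof (intro conjI ballI)
    fix i j assume i: "i \<in> {1..n}" and j: "j \<in> {1..n}"
    have fi: "f i \<in> B" "f j \<in> B" using f i j unfolding bij_betw_def by blast+
    show "inner (f i) (f j) = (if i = j then 1 else 0)"
    proof (cases "i = j")
      case True
      have "inner (f i) (f i) = (norm (f i))\<^sup>2" by (simp add: power2_norm_eq_inner)
      thus ?thesis using B(3)[OF fi(1)] True by simp
    next
      case False
      hence "f i \<noteq> f j" using f i j unfolding bij_betw_def inj_on_def by blast
      hence "orthogonal (f i) (f j)" using B(2) fi unfolding pairwise_def by blast
      thus ?thesis using False unfolding orthogonal_def by simp
    qed
  next
    have "f ` {1..n} = B" using f unfolding bij_betw_def by blast
    thus "span (f ` {1..n}) = T" using B(6) by simp
  qed
  thus ?thesis by (rule that)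
qed

definition sw :: "nat \<Rightarrow> nat \<Rightarrow> nat" where
  "sw k i = (if i = 1 then k else if i = k then 1 else i)"

lemma sw_in: "k \<in> {1..n} \<Longrightarrow> i \<in> {1..n} \<Longrightarrow> sw k i \<in> {1..n}"
  unfolding sw_def by auto

lemma sw_sw: "sw k (sw k i) = i"
  unfolding sw_def by auto

lemma sw_image: "k \<in> {1..n} \<Longrightarrow> sw k ` {1..n} = {1..n}"
proof
  assume k: "k \<in> {1..n}"
  show "sw k ` {1..n} \<subseteq> {1..n}" using sw_in[OF k] by blast
  show "{1..n} \<subseteq> sw k ` {1..n}"
  proof
    fix i assume i: "i \<in> {1..n}"
    have "i = sw k (sw k i)" by (simp add: sw_sw)
    thus "i \<in> sw k ` {1..n}" using sw_in[OF k i] by blast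
  qed
qed

lemma onb_sw: assumes o: "onb T n e" and k: "k \<in> {1..n}" shows "onb T n (e \<circ> sw k)"
  unfolding onb_def
proof (intro conjI ballI)
  fix i j assume i: "i \<in> {1..n}" and j: "j \<in> {1..n}"
  have "(sw k i = sw k j) = (i = j)"
  proof
    assume "sw k i = sw k j"
    hence "sw k (sw k i) = sw k (sw k j)" by simp
    thus "i = j" by (simp add: sw_sw)
  qed simp
  thus "inner ((e \<circ> sw k) i) ((e \<circ> sw k) j) = (if i = j then 1 else 0)"
    using onb_inner[OF o sw_in[OF k i] sw_in[OF k j]] by simp
next
  have "(e \<circ> sw k) ` {1..n} = e ` (sw k ` {1..n})" by (rule image_comp[symmetric])
  hence "(e \<circ> sw k) ` {1..n} = e ` {1..n}" using sw_image[OF k] by simp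
  thus "span ((e \<circ> sw k) ` {1..n}) = T" using o by (simp add: onb_def)
qed

lemma sT_sw: "k \<in> {1..n} \<Longrightarrow> i \<in> {1..n} \<Longrightarrow> j \<in> {1..n} \<Longrightarrow> l \<in> {1..n} \<Longrightarrow>
   sT (e \<circ> sw k) i j l = sT e (sw k i) (sw k j) (sw k l)"
proof -
  assume k: "k \<in> {1..n}" and i: "i \<in> {1..n}" and j: "j \<in> {1..n}" and l: "l \<in> {1..n}"
  have "sw k i \<in> {1..n}" "sw k j \<in> {1..n}" "sw k l \<in> {1..n}" using sw_in[OF k] i j l by auto
  thus ?thesis using i j l unfolding sT_def by simp
qed

lemma h_lin: assumes o: "onb T n e" and y: "y \<in> T" and I: "I \<subseteq> {1..n}"
  shows "h (\<Sum>i\<in>I. f i *\<^sub>R e i) y = (\<Sum>i\<in>I. f i *\<^sub>R h (e i) y)"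
proof -
  have "finite I" using I finite_subset by blast
  thus ?thesis using I
  proof (induction I rule: finite_induct)
    case empty
    have "h (0 *\<^sub>R y) y = 0 *\<^sub>R h y y" by (rule h_scale[OF y y])
    thus ?case by simp
  next
    case (insert i F)
    have iT: "e i \<in> T" using insert.prems onb_in[OF o] by auto
    have FT: "(\<Sum>j\<in>F. f j *\<^sub>R e j) \<in> T"
      using insert.prems onb_in[OF o] T_sub by (intro subspace_sum subspace_scale) auto
    have ciT: "f i *\<^sub>R e i \<in> T" using iT T_sub by (simp add: subspace_scale)
    have "h (\<Sum>j\<in>insert i F. f j *\<^sub>R e j) y = h (f i *\<^sub>R e i + (\<Sum>j\<in>F. f j *\<^sub>R e j)) y"
      using insert.hyps by simp
    also have "\<dots> = h (f i *\<^sub>R e i) y + h (\<Sum>j\<in>F. f j *\<^sub>R e j) y" by (rule h_add[OF ciT FT y])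
    also have "\<dots> = f i *\<^sub>R h (e i) y + (\<Sum>j\<in>F. f j *\<^sub>R h (e j) y)"
      using h_scale[OF iT y] insert by simp
    finally show ?case using insert.hyps by simp
  qed
qed

lemma h_zero:
  assumes o: "onb T n e" and z: "\<And>i j l. i \<in> {1..n} \<Longrightarrow> j \<in> {1..n} \<Longrightarrow> l \<in> {1..n} \<Longrightarrow> sT e i j l = 0"
    and x: "x \<in> T" and y: "y \<in> T"
  shows "h x y = 0"
proof -
  have hb: "h (e i) (e j) = 0" if i: "i \<in> {1..n}" and j: "j \<in> {1..n}" for i j
  proof -
    obtain w where w: "w \<in> T" "h (e i) (e j) = J w" using h_J onb_in[OF o i] onb_in[OF o j] by blast
    have "w = (\<Sum>r\<in>{1..n}. inner w (e r) *\<^sub>R e r)" by (rule expand[OF o w(1)])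
    also have "\<dots> = 0"
    proof (intro sum.neutral ballI)
      fix r assume r: "r \<in> {1..n}"
      have "inner w (e r) = sT e i j r" unfolding sT_def using i j r w(2) J_isom by simp
      thus "inner w (e r) *\<^sub>R e r = 0" using z[OF i j r] by simp
    qed
    finally have "w = 0" .
    thus ?thesis using w(2) J_lin by (simp add: linear_0)
  qed
  have hy: "h (e i) y = 0" if i: "i \<in> {1..n}" for i
  proof -
    have "h (e i) y = h y (e i)" using h_sym onb_in[OF o i] y by simp
    also have "\<dots> = h (\<Sum>j\<in>{1..n}. inner y (e j) *\<^sub>R e j) (e i)" using expand[OF o y] by simp
    also have "\<dots> = (\<Sum>j\<in>{1..n}. inner y (e j) *\<^sub>R h (e j) (e i))" by (rule h_lin[OF o onb_in[OF o i]]) simp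
    also have "\<dots> = 0" using hb i by simp
    finally show ?thesis .
  qed
  have "h x y = h (\<Sum>j\<in>{1..n}. inner x (e j) *\<^sub>R e j) y" using expand[OF o x] by simp
  also have "\<dots> = (\<Sum>j\<in>{1..n}. inner x (e j) *\<^sub>R h (e j) y)" by (rule h_lin[OF o y]) simp
  also have "\<dots> = 0" using hy by simp
  finally show ?thesis .
qed

end



theorem theorem5p1:
  fixes n :: nat
    and J :: "'a::euclidean_space \<Rightarrow> 'a"
    and xi :: 'a
    and a b c :: real
    and Rbar RN :: "'a \<Rightarrow> 'a \<Rightarrow> 'a \<Rightarrow> 'a \<Rightarrow> real"
    and T :: "'a set"
    and h :: "'a \<Rightarrow> 'a \<Rightarrow> 'a"
  assumes n3: "n \<ge> 3"
    and dimM: "DIM('a) = 2 * n"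
    and J_lin: "linear J"
    and J_sq: "\<And>v. J (J v) = - v"
    and J_isom: "\<And>u v. inner (J u) (J v) = inner u v"
    and xi_unit: "norm xi = 1"
    and QCH: "\<And>X Y Z U. Rbar X Y Z U =
               a * piT J X Y Z U + b * PhiT J xi X Y Z U + c * PsiT J xi X Y Z U"
    and T_sub: "subspace T"
    and dimN: "dim T = n"
    and Lagr: "J ` T = {v. \<forall>w\<in>T. inner v w = 0}"
    and h_sym: "\<And>x y. x \<in> T \<Longrightarrow> y \<in> T \<Longrightarrow> h x y = h y x"
    and h_add: "\<And>x y z. x \<in> T \<Longrightarrow> y \<in> T \<Longrightarrow> z \<in> T \<Longrightarrow> h (x + y) z = h x z + h y z"
    and h_scale: "\<And>r x z. x \<in> T \<Longrightarrow> z \<in> T \<Longrightarrow> h (r *\<^sub>R x) z = r *\<^sub>R h x z"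
    and h_normal: "\<And>x y w. x \<in> T \<Longrightarrow> y \<in> T \<Longrightarrow> w \<in> T \<Longrightarrow> inner (h x y) w = 0"
    and h_Kaehler: "\<And>x y z. x \<in> T \<Longrightarrow> y \<in> T \<Longrightarrow> z \<in> T \<Longrightarrow>
                      inner (h x y) (J z) = inner (h x z) (J y)"
    and Gauss: "\<And>X Y Z U. X \<in> T \<Longrightarrow> Y \<in> T \<Longrightarrow> Z \<in> T \<Longrightarrow> U \<in> T \<Longrightarrow>
                  RN X Y Z U = Rbar X Y Z U + inner (h X U) (h Y Z) - inner (h X Z) (h Y U)"
  defines "rhs \<equiv> (\<lambda>e::nat \<Rightarrow> 'a.
      let X = e 1; etaT = tproj n e xi; etT = tproj n e (J xi) in
        - (real (n - 2) * real (n - 1) * real (n + 1) / 8) * a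
        - (real (n - 2) / 8) * (real n - ((inner xi X)\<^sup>2 + (inner (J xi) X)\<^sup>2)) * b
        - ((real n - 1) * ((norm etaT)\<^sup>2 * (norm etT)\<^sup>2 - (inner etaT etT)\<^sup>2)
           - (norm (inner xi X *\<^sub>R etT - inner (J xi) X *\<^sub>R etaT))\<^sup>2) * c
        + (real n - 1) * tauB RN n e
        - (real (3 * n - 1) * real (n - 2) * (real n)\<^sup>2 / (2 * real (3 * n + 5)))
            * (norm (meanH h n e))\<^sup>2)"
  shows "(\<forall>X e. X \<in> T \<and> norm X = 1 \<and> onb T n e \<and> e 1 = X \<longrightarrow> RicB RN n e \<ge> rhs e)
       \<and> ((\<forall>X e. X \<in> T \<and> norm X = 1 \<and> onb T n e \<and> e 1 = X \<longrightarrow> RicB RN n e = rhs e)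
          \<longleftrightarrow> (\<forall>x\<in>T. \<forall>y\<in>T. h x y = 0))"
proof -
  interpret q: qch n J xi a b c Rbar RN T h
    by (rule qch.intro[OF n3 J_lin J_sq J_isom xi_unit QCH T_sub Lagr h_sym h_add h_scale h_normal h_Kaehler Gauss])
  have rhs_eq: "rhs e = q.rhsL e" for e unfolding rhs_def q.rhsL_def by (rule refl)
  have key: "RicB RN n e - rhs e = q.Qh (q.sT e)" if o: "onb T n e" for e
    using q.main_eq[OF o] rhs_eq by simp
  have hq1: "q.Qh (q.sT e) \<ge> 0" if o: "onb T n e" for e
    unfolding q.Qh_def by (rule hQ(1)[OF n3 q.s_sym1[OF o] q.s_sym2[OF o]])
  have hq2: "q.sT e 1 1 1 = 0 \<and> (\<forall>a\<in>{2..n}. \<forall>b\<in>{2..n}. q.sT e 1 a b = 0)"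
    if o: "onb T n e" and z: "q.Qh (q.sT e) = 0" for e
    using z unfolding q.Qh_def by (rule hQ(2)[OF n3 q.s_sym1[OF o] q.s_sym2[OF o]])
  have part1: "\<forall>X e. X \<in> T \<and> norm X = 1 \<and> onb T n e \<and> e 1 = X \<longrightarrow> RicB RN n e \<ge> rhs e"
  proof (intro allI impI)
    fix X e assume "X \<in> T \<and> norm X = 1 \<and> onb T n e \<and> e 1 = X"
    hence o: "onb T n e" by blast
    show "RicB RN n e \<ge> rhs e" using key[OF o] hq1[OF o] by simp
  qed
  have part2: "(\<forall>X e. X \<in> T \<and> norm X = 1 \<and> onb T n e \<and> e 1 = X \<longrightarrow> RicB RN n e = rhs e)
          \<longleftrightarrow> (\<forall>x\<in>T. \<forall>y\<in>T. h x y = 0)"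
  proof
    assume eq: "\<forall>X e. X \<in> T \<and> norm X = 1 \<and> onb T n e \<and> e 1 = X \<longrightarrow> RicB RN n e = rhs e"
    obtain e0 where o: "onb T n e0" using q.onb_exists[OF dimN] by blast
    have kk: "q.sT e0 k k k = 0 \<and> (\<forall>a\<in>{1..n}. \<forall>b\<in>{1..n}. a \<noteq> k \<longrightarrow> b \<noteq> k \<longrightarrow> q.sT e0 k a b = 0)"
      if k: "k \<in> {1..n}" for k
    proof -
      define e where "e = e0 \<circ> q.sw k"
      have ok: "onb T n e" unfolding e_def by (rule q.onb_sw[OF o k])
      have one: "(1::nat) \<in> {1..n}" using n3 by simp
      have e1T: "e 1 \<in> T" by (rule q.onb_in[OF ok one])
      have "inner (e 1) (e 1) = 1" using q.onb_inner[OF ok one one] by simp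
      hence e1n: "norm (e 1) = 1" by (simp add: norm_eq_sqrt_inner)
      have "RicB RN n e = rhs e" using eq ok e1T e1n by blast
      hence "q.Qh (q.sT e) = 0" using key[OF ok] by simp
      hence z: "q.sT e 1 1 1 = 0 \<and> (\<forall>a\<in>{2..n}. \<forall>b\<in>{2..n}. q.sT e 1 a b = 0)" by (rule hq2[OF ok])
      have swk1: "q.sw k 1 = k" unfolding q.sw_def by simp
      have "q.sT e0 k k k = 0" using z q.sT_sw[OF k one one one, of e0] swk1 unfolding e_def by simp
      moreover have "q.sT e0 k a b = 0" if a: "a \<in> {1..n}" "a \<noteq> k" and b: "b \<in> {1..n}" "b \<noteq> k" for a b
      proof -
        have a2: "q.sw k a \<in> {2..n}" using a k unfolding q.sw_def by auto
        have b2: "q.sw k b \<in> {2..n}" using b k unfolding q.sw_def by auto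
        have "q.sT e 1 (q.sw k a) (q.sw k b) = 0" using z a2 b2 by blast
        moreover have "q.sT e 1 (q.sw k a) (q.sw k b) = q.sT e0 k a b"
          using q.sT_sw[OF k one q.sw_in[OF k a(1)] q.sw_in[OF k b(1)], of e0] swk1
          unfolding e_def by (simp add: q.sw_sw)
        ultimately show ?thesis by simp
      qed
      ultimately show ?thesis by blast
    qed
    have z: "q.sT e0 i j l = 0" if i: "i \<in> {1..n}" and j: "j \<in> {1..n}" and l: "l \<in> {1..n}" for i j l
    proof (cases "j = i")
      case True
      show ?thesis
      proof (cases "l = i")
        case True
        thus ?thesis using kk[OF i] \<open>j = i\<close> by simp
      next
        case False
        have "q.sT e0 i j l = q.sT e0 l i i" using True q.s_sym1[OF o] q.s_sym2[OF o] by metis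
        thus ?thesis using kk[OF l] i False by auto
      qed
    next
      case False
      show ?thesis
      proof (cases "l = i")
        case True
        have "q.sT e0 i j l = q.sT e0 j i i" using True q.s_sym1[OF o] q.s_sym2[OF o] by metis
        thus ?thesis using kk[OF j] i False by auto
      next
        case False
        thus ?thesis using kk[OF i] j l \<open>j \<noteq> i\<close> by auto
      qed
    qed
    show "\<forall>x\<in>T. \<forall>y\<in>T. h x y = 0" using q.h_zero[OF o z] by blast
  next
    assume h0: "\<forall>x\<in>T. \<forall>y\<in>T. h x y = 0"
    show "\<forall>X e. X \<in> T \<and> norm X = 1 \<and> onb T n e \<and> e 1 = X \<longrightarrow> RicB RN n e = rhs e"
    proof (intro allI impI)
      fix X e assume "X \<in> T \<and> norm X = 1 \<and> onb T n e \<and> e 1 = X"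
      hence o: "onb T n e" by blast
      have s0: "q.sT e = (\<lambda>i j k. 0)"
        unfolding q.sT_def using h0 q.onb_in[OF o] by (auto simp: fun_eq_iff)
      have "q.Qh (q.sT e) = 0" unfolding s0 q.Qh_def by simp
      thus "RicB RN n e = rhs e" using key[OF o] by simp
    qed
  qed
  show ?thesis using part1 part2 by blast
qed


end
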